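(* Let $(p(N))_{N\in\mathbb N}$ be any sequence in $(0,\frac12)$. Then $$\max_{N>k\ge2}\ \max_{\sigma_{k+1}(W)<n\le\sigma_k(W)}\big(\log_N k-\log_N W(n)\big)\to0\quad\text{in }\mathbb P_N^{p(N),-}\text{-probability as }N\to\infty.$$
   Context: Let $\mathbb W$ be the set of integer sequences $w=(w(0),w(1),\dots)$ with $w(n+1)-w(n)\in\{-1,1\}$. For $p\in(0,1)$ and $k\in\mathbb Z$, $\mathbb P_k^p$ is the law on $\mathbb W$ of the simple random walk $W$ with $W(0)=k$ stepping $+1$ with probability $p$ and $-1$ with probability $1-p$. $\tau_k(w):=\min\{n\in\mathbb N_0:w(n)=k\}$, $\tau_k^+(w):=\min\{n\in\mathbb N:w(n)=k\}$, and $\sigma_k(w):=\max\{n\in\mathbb N_0: w(n)=k,\ w(j)\ge1\text{ for all }j\in\{0,\dots,n-1\}\}$ (last visit of $k$ before hitting $0$). For $p<1/2$, $\mathbb P_N^{p,-}$ is $\mathbb P_N^p$ conditioned on $\{\tau_0<\tau_N^+\}$. $\log_N x=\log x/\log N$. *)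

theory Defs
  imports "HOL-Probability.Probability"
begin

text \<open>Law P_k^p of the simple random walk on the path space W (sequences nat => int),
  realised as the image of i.i.d. Bernoulli(p) steps (True = +1, False = -1).\<close>
definition srw_law :: "real \<Rightarrow> int \<Rightarrow> (nat \<Rightarrow> int) measure" where
  "srw_law p k = distr (PiM UNIV (\<lambda>_. measure_pmf (bernoulli_pmf p)))
                       (PiM UNIV (\<lambda>_. count_space UNIV))
                       (\<lambda>\<omega> n. k + (\<Sum>i<n. if \<omega> i then 1 else -1))"

definition hit_time :: "int \<Rightarrow> (nat \<Rightarrow> int) \<Rightarrow> enat" where
  "hit_time k w = (if \<exists>n. w n = k then enat (LEAST n. w n = k) else \<infinity>)"

definition hit_time_pos :: "int \<Rightarrow> (nat \<Rightarrow> int) \<Rightarrow> enat" where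
  "hit_time_pos k w = (if \<exists>n\<ge>1. w n = k then enat (LEAST n. 1 \<le> n \<and> w n = k) else \<infinity>)"

definition last_visit :: "int \<Rightarrow> (nat \<Rightarrow> int) \<Rightarrow> nat" where
  "last_visit k w = Max {n. w n = k \<and> (\<forall>j<n. w j \<ge> 1)}"

definition max_dev :: "nat \<Rightarrow> (nat \<Rightarrow> int) \<Rightarrow> real" where
  "max_dev N w = Max {log (real N) (real k) - log (real N) (real_of_int (w n)) | k n.
       2 \<le> k \<and> k < N \<and> last_visit (int k + 1) w < n \<and> n \<le> last_visit (int k) w}"

end

theory Submission
  imports Defs "HOL-Real_Asymp.Real_Asymp"
begin

abbreviation PS :: "(nat \<Rightarrow> int) measure" where
  "PS \<equiv> PiM UNIV (\<lambda>_. count_space UNIV)"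

abbreviation Om :: "real \<Rightarrow> (nat \<Rightarrow> bool) measure" where
  "Om p \<equiv> PiM UNIV (\<lambda>_. measure_pmf (bernoulli_pmf p))"

definition walk :: "int \<Rightarrow> (nat \<Rightarrow> bool) \<Rightarrow> nat \<Rightarrow> int" where
  "walk k \<omega> n = k + (\<Sum>i<n. if \<omega> i then 1 else -1)"

lemma space_PS[simp]: "space PS = UNIV"
  by (auto simp: space_PiM)

lemma space_Om[simp]: "space (Om p) = UNIV"
  by (auto simp: space_PiM)

lemma walk_meas_n: "(\<lambda>\<omega>. walk k \<omega> n) \<in> measurable (Om p) (count_space UNIV)"
proof (induction n)
  case 0 then show ?case by (simp add: walk_def)
next
  case (Suc n)
  have e: "(\<lambda>\<omega>. walk k \<omega> (Suc n)) = (\<lambda>\<omega>. walk k \<omega> n + (if \<omega> n then 1 else -1))"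
    by (auto simp: walk_def)
  show ?case unfolding e using Suc by measurable
qed

lemma walk_meas: "walk k \<in> measurable (Om p) PS"
  by (rule measurable_PiM_single') (auto intro: walk_meas_n)

lemma Om_iter:
  assumes X: "X \<in> sets (Om p)" and p: "0 \<le> p" "p \<le> 1"
  shows "emeasure (Om p) X = ennreal p * emeasure (Om p) {\<omega>. case_nat True \<omega> \<in> X}
            + ennreal (1-p) * emeasure (Om p) {\<omega>. case_nat False \<omega> \<in> X}"
proof -
  interpret S: sequence_space "measure_pmf (bernoulli_pmf p)" ..
  interpret P: pair_sigma_finite "measure_pmf (bernoulli_pmf p)" "Om p" ..
  have m: "(\<lambda>(s, \<omega>). case_nat s \<omega>) \<in> measurable (measure_pmf (bernoulli_pmf p) \<Otimes>\<^sub>M Om p) (Om p)"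
    by measurable
  have "emeasure (Om p) X = emeasure (distr (measure_pmf (bernoulli_pmf p) \<Otimes>\<^sub>M Om p) (Om p) (\<lambda>(s, \<omega>). case_nat s \<omega>)) X"
    by (simp add: S.PiM_iter)
  also have "\<dots> = emeasure (measure_pmf (bernoulli_pmf p) \<Otimes>\<^sub>M Om p) ((\<lambda>(s, \<omega>). case_nat s \<omega>) -` X \<inter> space (measure_pmf (bernoulli_pmf p) \<Otimes>\<^sub>M Om p))"
    by (rule emeasure_distr[OF m X])
  also have "\<dots> = (\<integral>\<^sup>+s. emeasure (Om p) (Pair s -` ((\<lambda>(s, \<omega>). case_nat s \<omega>) -` X \<inter> space (measure_pmf (bernoulli_pmf p) \<Otimes>\<^sub>M Om p))) \<partial>measure_pmf (bernoulli_pmf p))"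
    by (rule S.emeasure_pair_measure_alt) (rule measurable_sets[OF m X])
  also have "\<dots> = (\<integral>\<^sup>+s. emeasure (Om p) {\<omega>. case_nat s \<omega> \<in> X} \<partial>measure_pmf (bernoulli_pmf p))"
    by (auto intro!: nn_integral_cong arg_cong2[where f=emeasure] simp: space_pair_measure)
  also have "\<dots> = emeasure (Om p) {\<omega>. case_nat True \<omega> \<in> X} * p + emeasure (Om p) {\<omega>. case_nat False \<omega> \<in> X} * (1-p)"
    using p by simp
  finally show ?thesis by (simp add: mult.commute)
qed

lemma srw_eq: "srw_law p k = distr (Om p) PS (walk k)"
  unfolding srw_law_def walk_def[abs_def] ..

lemma prob_space_srw: "prob_space (srw_law p k)"
  unfolding srw_eq by (intro prob_space.prob_space_distr prob_space_PiM walk_meas prob_space_measure_pmf)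

lemma finite_measure_srw: "finite_measure (srw_law p k)"
  using prob_space_srw by (simp add: prob_space_def)

lemma emeasure_srw_eq: "emeasure (srw_law p k) A = ennreal (measure (srw_law p k) A)"
  by (rule finite_measure.emeasure_eq_measure[OF finite_measure_srw])

lemma sets_srw[simp, measurable_cong]: "sets (srw_law p k) = sets PS"
  unfolding srw_eq by simp

lemma space_srw[simp]: "space (srw_law p k) = UNIV"
  unfolding srw_eq by simp

lemma walk_case_nat: "walk k (case_nat b \<omega>) = case_nat k (walk (k + (if b then 1 else -1)) \<omega>)"
proof
  fix n show "walk k (case_nat b \<omega>) n = case_nat k (walk (k + (if b then 1 else -1)) \<omega>) n"
  proof (cases n)
    case 0 then show ?thesis by (simp add: walk_def)
  next
    case (Suc m)
    have "walk k (case_nat b \<omega>) (Suc m) = k + ((if b then 1 else -1) + (\<Sum>i<m. if \<omega> i then 1 else -1))"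
      unfolding walk_def by (subst sum.lessThan_Suc_shift) simp
    then show ?thesis using Suc by (simp add: walk_def)
  qed
qed

lemma case_nat_meas[measurable]: "(\<lambda>w. case_nat (k::int) w) \<in> measurable PS PS"
  by (rule measurable_PiM_single') (auto split: nat.split)

lemma emeasure_srw: "E \<in> sets PS \<Longrightarrow> emeasure (srw_law p k) E = emeasure (Om p) (walk k -` E)"
  unfolding srw_eq by (subst emeasure_distr) (auto intro: walk_meas)

lemma one_step:
  assumes E: "E \<in> sets PS" and p: "0 \<le> p" "p \<le> 1"
  shows "measure (srw_law p k) E = p * measure (srw_law p (k+1)) {w. case_nat k w \<in> E}
            + (1-p) * measure (srw_law p (k-1)) {w. case_nat k w \<in> E}"
proof -
  have E': "{w. case_nat k w \<in> E} \<in> sets PS"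
    using measurable_sets[OF case_nat_meas E] by (simp add: vimage_def)
  have X: "walk k -` E \<in> sets (Om p)"
    using measurable_sets[OF walk_meas E] by simp
  have "emeasure (srw_law p k) E = ennreal p * emeasure (Om p) {\<omega>. case_nat True \<omega> \<in> walk k -` E}
            + ennreal (1-p) * emeasure (Om p) {\<omega>. case_nat False \<omega> \<in> walk k -` E}"
    using Om_iter[OF X p] emeasure_srw[OF E] by simp
  also have "{\<omega>. case_nat True \<omega> \<in> walk k -` E} = walk (k+1) -` {w. case_nat k w \<in> E}"
    by (auto simp: walk_case_nat)
  also have "{\<omega>. case_nat False \<omega> \<in> walk k -` E} = walk (k-1) -` {w. case_nat k w \<in> E}"
    by (auto simp: walk_case_nat)
  finally have "emeasure (srw_law p k) E = ennreal p * emeasure (srw_law p (k+1)) {w. case_nat k w \<in> E}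
            + ennreal (1-p) * emeasure (srw_law p (k-1)) {w. case_nat k w \<in> E}"
    using emeasure_srw[OF E'] by simp
  then show ?thesis
    using p by (simp add: emeasure_srw_eq ennreal_mult[symmetric] ennreal_plus[symmetric] del: ennreal_plus)
qed

lemma start_null:
  assumes E: "E \<in> sets PS" and "\<And>w. w 0 = k \<Longrightarrow> w \<notin> E"
  shows "measure (srw_law p k) E = 0"
proof -
  have "walk k -` E = {}" using assms(2) by (auto simp: walk_def)
  then show ?thesis using emeasure_srw[OF E] by (simp add: measure_def)
qed

lemma start_full:
  assumes E: "E \<in> sets PS" and "\<And>w. w 0 = k \<Longrightarrow> w \<in> E"
  shows "measure (srw_law p k) E = 1"
proof -
  interpret prob_space "srw_law p k" by (rule prob_space_srw)
  have "measure (srw_law p k) (UNIV - E) = 0"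
    using assms sets.compl_sets[OF E] by (intro start_null) auto
  then show ?thesis using prob_compl[of E] E by simp
qed

definition shft :: "nat \<Rightarrow> (nat \<Rightarrow> int) \<Rightarrow> nat \<Rightarrow> int" where
  "shft u w = (\<lambda>n. w (u + n))"

definition dep :: "nat \<Rightarrow> (nat \<Rightarrow> int) set \<Rightarrow> bool" where
  "dep u G \<longleftrightarrow> (\<forall>w w'. (\<forall>i\<le>u. w i = w' i) \<longrightarrow> (w \<in> G \<longleftrightarrow> w' \<in> G))"

lemma shift_meas[measurable]: "shft u \<in> measurable PS PS"
  unfolding shft_def by (rule measurable_PiM_single') auto

lemma start_eq:
  assumes "E1 \<in> sets PS" "E2 \<in> sets PS" "\<And>w. w 0 = x \<Longrightarrow> w \<in> E1 \<longleftrightarrow> w \<in> E2"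
  shows "measure (srw_law p x) E1 = measure (srw_law p x) E2"
proof -
  have "walk x -` E1 = walk x -` E2" using assms(3) by (auto simp: walk_def)
  then show ?thesis using emeasure_srw[OF assms(1)] emeasure_srw[OF assms(2)] by (simp add: measure_def)
qed

lemma markov:
  assumes p: "0 \<le> p" "p \<le> 1" and F: "F \<in> sets PS"
  shows "G \<in> sets PS \<Longrightarrow> dep u G \<Longrightarrow> (\<forall>w\<in>G. w u = c) \<Longrightarrow>
    measure (srw_law p x) (G \<inter> {w. shft u w \<in> F}) = measure (srw_law p x) G * measure (srw_law p c) F"
proof (induction u arbitrary: x G)
  case 0
  have GF: "G \<inter> {w. shft 0 w \<in> F} \<in> sets PS"
    using 0(1) measurable_sets[OF shift_meas F] by (auto simp: vimage_def)
  show ?case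
  proof (cases "(\<lambda>_. x) \<in> G")
    case True
    have in_G: "w 0 = x \<Longrightarrow> w \<in> G" for w
      using 0(2) True unfolding dep_def by (metis le_zero_eq)
    have "c = x" using 0(3) True by auto
    have "measure (srw_law p x) (G \<inter> {w. shft 0 w \<in> F}) = measure (srw_law p x) F"
      using in_G by (intro start_eq GF F) (auto simp: shft_def)
    moreover have "measure (srw_law p x) G = 1"
      using in_G by (intro start_full 0(1)) auto
    ultimately show ?thesis using \<open>c = x\<close> by simp
  next
    case False
    have nin_G: "w 0 = x \<Longrightarrow> w \<notin> G" for w
      using 0(2) False unfolding dep_def by (metis le_zero_eq)
    have "measure (srw_law p x) (G \<inter> {w. shft 0 w \<in> F}) = 0"
      using nin_G by (intro start_null GF) auto
    moreover have "measure (srw_law p x) G = 0"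
      using nin_G by (intro start_null 0(1)) auto
    ultimately show ?thesis by simp
  qed
next
  case (Suc u)
  define G' where "G' = {w. case_nat x w \<in> G}"
  have G': "G' \<in> sets PS" unfolding G'_def
    using measurable_sets[OF case_nat_meas Suc(2)] by (simp add: vimage_def)
  have dG': "dep u G'" using Suc(3) unfolding dep_def G'_def
    by (auto simp: le_Suc_eq all_conj_distrib split: nat.split)
  have cG': "\<forall>w\<in>G'. w u = c" using Suc(4) unfolding G'_def by auto
  have GF: "G \<inter> {w. shft (Suc u) w \<in> F} \<in> sets PS"
    using Suc(2) measurable_sets[OF shift_meas F] by (auto simp: vimage_def)
  have e: "{w. case_nat x w \<in> G \<inter> {w. shft (Suc u) w \<in> F}} = G' \<inter> {w. shft u w \<in> F}"
    by (auto simp: G'_def shft_def)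
  have "measure (srw_law p x) (G \<inter> {w. shft (Suc u) w \<in> F})
     = p * measure (srw_law p (x+1)) (G' \<inter> {w. shft u w \<in> F}) + (1-p) * measure (srw_law p (x-1)) (G' \<inter> {w. shft u w \<in> F})"
    using one_step[OF GF p] e by simp
  also have "\<dots> = (p * measure (srw_law p (x+1)) G' + (1-p) * measure (srw_law p (x-1)) G') * measure (srw_law p c) F"
    using Suc.IH[OF G' dG' cG'] by (simp add: algebra_simps)
  also have "p * measure (srw_law p (x+1)) G' + (1-p) * measure (srw_law p (x-1)) G' = measure (srw_law p x) G"
    using one_step[OF Suc(2) p] by (simp add: G'_def)
  finally show ?case .
qed

lemma strong_markov:
  assumes p: "0 \<le> p" "p \<le> 1" and F: "F \<in> sets PS"
    and \<Phi>: "\<And>t. \<Phi> t \<in> sets PS" "\<And>t. dep t (\<Phi> t)" "\<And>t w. w \<in> \<Phi> t \<Longrightarrow> w t = c"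
    and disj: "disjoint_family \<Phi>"
  shows "measure (srw_law p x) (\<Union>t. \<Phi> t \<inter> {w. shft t w \<in> F}) = measure (srw_law p x) (\<Union>t. \<Phi> t) * measure (srw_law p c) F"
proof -
  interpret prob_space "srw_law p x" by (rule prob_space_srw)
  have m1: "range (\<lambda>t. \<Phi> t \<inter> {w. shft t w \<in> F}) \<subseteq> sets (srw_law p x)"
    using \<Phi>(1) measurable_sets[OF shift_meas F] by (auto simp: vimage_def)
  have d1: "disjoint_family (\<lambda>t. \<Phi> t \<inter> {w. shft t w \<in> F})"
    using disj by (auto simp: disjoint_family_on_def)
  have s1: "(\<lambda>t. measure (srw_law p x) (\<Phi> t \<inter> {w. shft t w \<in> F})) sums measure (srw_law p x) (\<Union>t. \<Phi> t \<inter> {w. shft t w \<in> F})"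
    by (rule measure_UNION[OF m1 d1]) (simp add: emeasure_srw_eq)
  have s2: "(\<lambda>t. measure (srw_law p x) (\<Phi> t)) sums measure (srw_law p x) (\<Union>t. \<Phi> t)"
    by (rule measure_UNION) (use \<Phi>(1) disj in \<open>auto simp: emeasure_srw_eq\<close>)
  have "(\<lambda>t. measure (srw_law p x) (\<Phi> t \<inter> {w. shft t w \<in> F})) = (\<lambda>t. measure (srw_law p x) (\<Phi> t) * measure (srw_law p c) F)"
    using markov[OF p F \<Phi>(1) \<Phi>(2)] \<Phi>(3) by auto
  with s1 have "(\<lambda>t. measure (srw_law p x) (\<Phi> t) * measure (srw_law p c) F) sums measure (srw_law p x) (\<Union>t. \<Phi> t \<inter> {w. shft t w \<in> F})"
    by simp
  moreover have "(\<lambda>t. measure (srw_law p x) (\<Phi> t) * measure (srw_law p c) F) sums (measure (srw_law p x) (\<Union>t. \<Phi> t) * measure (srw_law p c) F)"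
    by (rule sums_mult2[OF s2])
  ultimately show ?thesis by (rule sums_unique2)
qed

definition preh :: "int set \<Rightarrow> int \<Rightarrow> nat \<Rightarrow> (nat \<Rightarrow> int) set" where
  "preh S c t = {w. w t = c \<and> (\<forall>i<t. w i \<in> S)}"

definition HIT :: "int set \<Rightarrow> int \<Rightarrow> (nat \<Rightarrow> int) set" where
  "HIT S c = (\<Union>t. preh S c t)"

lemma pre_meas[measurable]: "preh S c t \<in> sets PS"
proof -
  have "{w \<in> space PS. w t = c \<and> (\<forall>i<t. w i \<in> S)} \<in> sets PS" by measurable
  then show ?thesis unfolding preh_def by simp
qed

lemma HIT_meas[measurable]: "HIT S c \<in> sets PS"
  unfolding HIT_def by (intro sets.countable_UN) auto

lemma pre_dep: "dep t (preh S c t)"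
  unfolding dep_def preh_def by auto

lemma pre_disj: "c \<notin> S \<Longrightarrow> disjoint_family (preh S c)"
  unfolding disjoint_family_on_def preh_def
  by (auto, metis linorder_neqE_nat)

lemma strong_markov_hit:
  assumes p: "0 \<le> p" "p \<le> 1" and F: "F \<in> sets PS" and c: "c \<notin> S"
  shows "measure (srw_law p x) {w. \<exists>t. w \<in> preh S c t \<and> shft t w \<in> F} = measure (srw_law p x) (HIT S c) * measure (srw_law p c) F"
proof -
  have "{w. \<exists>t. w \<in> preh S c t \<and> shft t w \<in> F} = (\<Union>t. preh S c t \<inter> {w. shft t w \<in> F})" by auto
  then show ?thesis unfolding HIT_def
    using strong_markov[OF p F pre_meas pre_dep _ pre_disj[OF c], of c x] by (simp add: preh_def)
qed

definition HT :: "int set \<Rightarrow> int \<Rightarrow> nat \<Rightarrow> (nat \<Rightarrow> int) set" where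
  "HT S c T = (\<Union>t\<in>{..T}. preh S c t)"

lemma HT_meas[measurable]: "HT S c T \<in> sets PS"
  unfolding HT_def by (intro sets.finite_UN) auto

lemma hit_bound:
  fixes a b c x :: int and g :: "int \<Rightarrow> real"
  assumes p: "0 \<le> p" "p \<le> 1" and ab: "a < b" and c: "c = a \<or> c = b"
    and g0: "\<And>y. a \<le> y \<Longrightarrow> y \<le> b \<Longrightarrow> 0 \<le> g y" and gc: "1 \<le> g c"
    and gh: "\<And>y. a < y \<Longrightarrow> y < b \<Longrightarrow> p * g (y+1) + (1-p) * g (y-1) \<le> g y"
    and x: "a \<le> x" "x \<le> b"
  shows "measure (srw_law p x) (HIT {a<..<b} c) \<le> g x"
proof -
  let ?S = "{a<..<b}"
  have cS: "c \<notin> ?S" using c by auto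
  have HTb: "\<forall>x. a \<le> x \<longrightarrow> x \<le> b \<longrightarrow> measure (srw_law p x) (HT ?S c T) \<le> g x" for T
  proof (induction T)
    case 0
    show ?case
    proof (intro allI impI)
      fix x assume x: "a \<le> x" "x \<le> b"
      show "measure (srw_law p x) (HT ?S c 0) \<le> g x"
      proof (cases "x = c")
        case True
        have "measure (srw_law p x) (HT ?S c 0) \<le> 1"
          using prob_space.prob_le_1[OF prob_space_srw] by simp
        then show ?thesis using True gc by simp
      next
        case False
        have "measure (srw_law p x) (HT ?S c 0) = 0"
          using False by (intro start_null HT_meas) (auto simp: HT_def preh_def)
        then show ?thesis using g0 x by simp
      qed
    qed
  next
    case (Suc T)
    show ?case
    proof (intro allI impI)
      fix x assume x: "a \<le> x" "x \<le> b"
      show "measure (srw_law p x) (HT ?S c (Suc T)) \<le> g x"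
      proof (cases "x = c")
        case True
        have "measure (srw_law p x) (HT ?S c (Suc T)) \<le> 1"
          using prob_space.prob_le_1[OF prob_space_srw] by simp
        then show ?thesis using True gc by simp
      next
        case False
        show ?thesis
        proof (cases "x \<in> ?S")
          case False
          have "measure (srw_law p x) (HT ?S c (Suc T)) = 0"
          proof (intro start_null HT_meas)
            fix w :: "nat \<Rightarrow> int" assume w0: "w 0 = x"
            show "w \<notin> HT ?S c (Suc T)"
            proof
              assume "w \<in> HT ?S c (Suc T)"
              then obtain t where t: "w t = c" "\<forall>i<t. w i \<in> ?S" by (auto simp: HT_def preh_def)
              show False
              proof (cases t)
                case 0 then show False using t w0 \<open>x \<noteq> c\<close> by simp
              next
                case (Suc t') then show False using t(2) w0 False by auto
              qed
            qed
          qed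
          then show ?thesis using g0 x by simp
        next
          case True
          have e: "{w. case_nat x w \<in> HT ?S c (Suc T)} = HT ?S c T"
          proof (intro set_eqI iffI)
            fix w assume "w \<in> {w. case_nat x w \<in> HT ?S c (Suc T)}"
            then obtain t where t: "t \<le> Suc T" "case_nat x w t = c" "\<forall>i<t. case_nat x w i \<in> ?S"
              by (auto simp: HT_def preh_def)
            then obtain t' where t': "t = Suc t'" using \<open>x \<noteq> c\<close> by (cases t) auto
            have "\<forall>i<t'. w i \<in> ?S"
            proof (intro allI impI)
              fix i assume "i < t'" then have "Suc i < t" using t' by simp
              then show "w i \<in> ?S" using t(3) by fastforce
            qed
            then show "w \<in> HT ?S c T" using t t' by (auto simp: HT_def preh_def)
          next
            fix w assume "w \<in> HT ?S c T"
            then obtain t where t: "t \<le> T" "w t = c" "\<forall>i<t. w i \<in> ?S"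
              by (auto simp: HT_def preh_def)
            have "\<forall>i<Suc t. case_nat x w i \<in> ?S"
              using t(3) True by (auto simp: less_Suc_eq_0_disj)
            then show "w \<in> {w. case_nat x w \<in> HT ?S c (Suc T)}"
              using t by (auto simp: HT_def preh_def intro!: bexI[of _ "Suc t"])
          qed
          have "measure (srw_law p x) (HT ?S c (Suc T)) = p * measure (srw_law p (x+1)) (HT ?S c T) + (1-p) * measure (srw_law p (x-1)) (HT ?S c T)"
            using one_step[OF HT_meas[of ?S c "Suc T"] p, of x] e by simp
          also have "\<dots> \<le> p * g (x+1) + (1-p) * g (x-1)"
            using Suc.IH True p by (intro add_mono mult_left_mono) auto
          also have "\<dots> \<le> g x" using gh True by auto
          finally show ?thesis .
        qed
      qed
    qed
  qed
  interpret prob_space "srw_law p x" by (rule prob_space_srw)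
  have inc: "incseq (HT ?S c)" unfolding incseq_def HT_def by (auto, meson atMost_iff order_trans)
  have U: "(\<Union>T. HT ?S c T) = HIT ?S c" unfolding HT_def HIT_def by auto
  have "(\<lambda>T. measure (srw_law p x) (HT ?S c T)) \<longlonglongrightarrow> measure (srw_law p x) (\<Union>T. HT ?S c T)"
    by (rule finite_Lim_measure_incseq) (use inc in auto)
  then show ?thesis unfolding U
    by (rule LIMSEQ_le_const2) (use HTb x in auto)
qed

lemma markov_sums:
  assumes p: "0 \<le> p" "p \<le> 1" and F: "F \<in> sets PS"
    and \<Phi>: "\<And>t. \<Phi> t \<in> sets PS" "\<And>t. dep t (\<Phi> t)" "\<And>t w. w \<in> \<Phi> t \<Longrightarrow> w t = c"
    and disj: "disjoint_family (\<lambda>t. \<Phi> t \<inter> {w. shft t w \<in> F})"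
  shows "(\<lambda>t. measure (srw_law p x) (\<Phi> t) * measure (srw_law p c) F) sums measure (srw_law p x) (\<Union>t. \<Phi> t \<inter> {w. shft t w \<in> F})"
proof -
  have m1: "range (\<lambda>t. \<Phi> t \<inter> {w. shft t w \<in> F}) \<subseteq> sets (srw_law p x)"
    using \<Phi>(1) measurable_sets[OF shift_meas F] by (auto simp: vimage_def)
  have s1: "(\<lambda>t. measure (srw_law p x) (\<Phi> t \<inter> {w. shft t w \<in> F})) sums measure (srw_law p x) (\<Union>t. \<Phi> t \<inter> {w. shft t w \<in> F})"
    by (rule measure_UNION[OF m1 disj]) (simp add: emeasure_srw_eq)
  have "(\<lambda>t. measure (srw_law p x) (\<Phi> t \<inter> {w. shft t w \<in> F})) = (\<lambda>t. measure (srw_law p x) (\<Phi> t) * measure (srw_law p c) F)"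
    using markov[OF p F \<Phi>(1) \<Phi>(2)] \<Phi>(3) by auto
  with s1 show ?thesis by simp
qed

lemma coord_meas: "{v. v i = (c::int)} \<in> sets PS"
proof -
  have "{v \<in> space PS. v i = c} \<in> sets PS" by measurable
  then show ?thesis by simp
qed

lemma seq_meas[measurable]:
  assumes "F \<in> sets PS"
  shows "{w. \<exists>t. w \<in> preh S c t \<and> shft t w \<in> F} \<in> sets PS"
proof -
  have "{w. \<exists>t. w \<in> preh S c t \<and> shft t w \<in> F} = (\<Union>t. preh S c t \<inter> {w. shft t w \<in> F})" by auto
  also have "\<dots> \<in> sets PS"
    using measurable_sets[OF shift_meas assms] by (intro sets.countable_UN) (auto simp: vimage_def)
  finally show ?thesis .
qed

lemma step_meas[measurable]:
  assumes "F \<in> sets PS"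
  shows "{v. v 1 = c \<and> shft 1 v \<in> F} \<in> sets PS"
proof -
  have "{v. v 1 = c \<and> shft 1 v \<in> F} = {v. v 1 = c} \<inter> {v. shft 1 v \<in> F}" by auto
  also have "\<dots> \<in> sets PS"
    using measurable_sets[OF shift_meas assms] coord_meas by (intro sets.Int) (auto simp: vimage_def)
  finally show ?thesis .
qed

lemma step_measure:
  assumes p: "0 \<le> p" "p \<le> 1" and F: "F \<in> sets PS"
  shows "measure (srw_law p (c+1)) {v. v 1 = c \<and> shft 1 v \<in> F} = (1-p) * measure (srw_law p c) F"
proof -
  have e: "{w. case_nat (c+1) w \<in> {v. v 1 = c \<and> shft 1 v \<in> F}} = {w. w 0 = c \<and> w \<in> F}"
    by (auto simp: shft_def)
  have m: "{w. w 0 = c \<and> w \<in> F} \<in> sets PS"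
  proof -
    have "{w. w 0 = c \<and> w \<in> F} = {v. v 0 = c} \<inter> F" by auto
    also have "\<dots> \<in> sets PS" using F coord_meas by (intro sets.Int) auto
    finally show ?thesis .
  qed
  have "measure (srw_law p (c+1+1)) {w. w 0 = c \<and> w \<in> F} = 0"
    by (intro start_null m) auto
  moreover have "measure (srw_law p (c+1-1)) {w. w 0 = c \<and> w \<in> F} = measure (srw_law p c) F"
    by (simp, intro start_eq m F) auto
  ultimately show ?thesis
    using one_step[OF step_meas[OF F, of c] p, of "c+1"] e by (simp add: add.commute)
qed

lemma hit_high:
  fixes a b x :: int
  assumes p: "0 < p" "p < 1/2" and ab: "0 \<le> a" "a < b" and x: "a \<le> x" "x \<le> b"
  defines "r \<equiv> (1-p)/p"
  shows "measure (srw_law p x) (HIT {a<..<b} b) \<le> (r^nat x - r^nat a)/(r^nat b - r^nat a)"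
proof -
  have r1: "1 < r" using p by (simp add: r_def field_simps)
  have den: "r^nat a < r^nat b" using r1 ab by (intro power_strict_increasing) auto
  show ?thesis
  proof (rule hit_bound[where g="\<lambda>y. (r^nat y - r^nat a)/(r^nat b - r^nat a)"])
    fix y assume y: "a \<le> y" "y \<le> b"
    then have "r^nat a \<le> r^nat y" using r1 by (intro power_increasing) auto
    then show "0 \<le> (r^nat y - r^nat a)/(r^nat b - r^nat a)" using den by simp
  next
    fix y assume y: "a < y" "y < b"
    then obtain n where n: "nat y = Suc n" using ab by (cases "nat y") auto
    have y1: "nat (y+1) = Suc (Suc n)" "nat (y-1) = n" using n y ab by auto
    have h: "p * r^Suc (Suc n) + (1-p) * r^n = r^Suc n"
      using p by (simp add: r_def field_simps power2_eq_square)
    have "p * ((r^nat (y+1) - r^nat a)/(r^nat b - r^nat a)) + (1-p) * ((r^nat (y-1) - r^nat a)/(r^nat b - r^nat a))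
        = (p * (r^Suc (Suc n) - r^nat a) + (1-p) * (r^n - r^nat a))/(r^nat b - r^nat a)"
      unfolding y1 by (simp add: add_divide_distrib)
    also have "\<dots> = (p * r^Suc (Suc n) + (1-p) * r^n - r^nat a)/(r^nat b - r^nat a)"
      by (simp add: algebra_simps)
    also have "\<dots> = (r^nat y - r^nat a)/(r^nat b - r^nat a)" using h n by simp
    finally show "p * ((r^nat (y+1) - r^nat a)/(r^nat b - r^nat a)) + (1-p) * ((r^nat (y-1) - r^nat a)/(r^nat b - r^nat a))
        \<le> (r^nat y - r^nat a)/(r^nat b - r^nat a)" by simp
  qed (use p ab x den in auto)
qed

lemma hit_low:
  fixes a b x :: int
  assumes p: "0 < p" "p < 1/2" and ab: "0 \<le> a" "a < b" and x: "a \<le> x" "x \<le> b"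
  defines "r \<equiv> (1-p)/p"
  shows "measure (srw_law p x) (HIT {a<..<b} a) \<le> (r^nat b - r^nat x)/(r^nat b - r^nat a)"
proof -
  have r1: "1 < r" using p by (simp add: r_def field_simps)
  have den: "r^nat a < r^nat b" using r1 ab by (intro power_strict_increasing) auto
  show ?thesis
  proof (rule hit_bound[where g="\<lambda>y. (r^nat b - r^nat y)/(r^nat b - r^nat a)"])
    fix y assume y: "a \<le> y" "y \<le> b"
    then have "r^nat y \<le> r^nat b" using r1 by (intro power_increasing) auto
    then show "0 \<le> (r^nat b - r^nat y)/(r^nat b - r^nat a)" using den by simp
  next
    fix y assume y: "a < y" "y < b"
    then obtain n where n: "nat y = Suc n" using ab by (cases "nat y") auto
    have y1: "nat (y+1) = Suc (Suc n)" "nat (y-1) = n" using n y ab by auto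
    have h: "p * r^Suc (Suc n) + (1-p) * r^n = r^Suc n"
      using p by (simp add: r_def field_simps power2_eq_square)
    have "p * ((r^nat b - r^nat (y+1))/(r^nat b - r^nat a)) + (1-p) * ((r^nat b - r^nat (y-1))/(r^nat b - r^nat a))
        = (p * (r^nat b - r^Suc (Suc n)) + (1-p) * (r^nat b - r^n))/(r^nat b - r^nat a)"
      unfolding y1 by (simp add: add_divide_distrib)
    also have "\<dots> = (r^nat b - (p * r^Suc (Suc n) + (1-p) * r^n))/(r^nat b - r^nat a)"
      by (simp add: algebra_simps)
    also have "\<dots> = (r^nat b - r^nat y)/(r^nat b - r^nat a)" using h n by simp
    finally show "p * ((r^nat b - r^nat (y+1))/(r^nat b - r^nat a)) + (1-p) * ((r^nat b - r^nat (y-1))/(r^nat b - r^nat a))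
        \<le> (r^nat b - r^nat y)/(r^nat b - r^nat a)" by simp
  qed (use p ab x den in auto)
qed

lemma amgm_geom:
  fixes r :: real assumes r: "0 \<le> r"
  shows "real m ^ 2 * r ^ (m - 1) \<le> (\<Sum>i<m. r^i) ^ 2"
proof -
  have "(\<Sum>i<m. r^i) = (\<Sum>i<m. r^(m - Suc i))"
    by (rule sum.nat_diff_reindex[symmetric])
  then have "2 * (\<Sum>i<m. r^i) = (\<Sum>i<m. r^i + r^(m - Suc i))"
    by (simp add: sum.distrib)
  also have "\<dots> \<ge> (\<Sum>i<m. 2 * sqrt (r^(m-1)))"
  proof (rule sum_mono)
    fix i assume i: "i \<in> {..<m}"
    have "r^i * r^(m - Suc i) = r^(m-1)"
      using i by (simp add: power_add[symmetric])
    then show "2 * sqrt (r^(m-1)) \<le> r^i + r^(m - Suc i)"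
      using arith_geo_mean_sqrt[of "r^i" "r^(m - Suc i)"] r by simp
  qed
  finally have "real m * sqrt (r^(m-1)) \<le> (\<Sum>i<m. r^i)" by simp
  then have "(real m * sqrt (r^(m-1)))^2 \<le> (\<Sum>i<m. r^i)^2"
    using r by (intro power_mono) auto
  then show ?thesis using r by (simp add: power_mult_distrib)
qed

lemma ck_bound:
  fixes r :: real and J k :: nat
  assumes r: "1 < r" and J: "1 \<le> J" "J < k"
  shows "(r^(k+1) - r^k)/(r^(k+1) - r^J) * ((r^J - 1)/(r^k - 1)) \<le> real J / (real (k+1-J))^2"
proof -
  define m where "m = k + 1 - J"
  have m2: "2 \<le> m" using J by (simp add: m_def)
  have km: "k + 1 = J + m" "k = (J - 1) + m" using J by (simp_all add: m_def)
  define A where "A = (\<Sum>i<k. r^i)"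
  define B where "B = (\<Sum>i<m. r^i)"
  define C where "C = (\<Sum>i<J. r^i)"
  have A: "r^k - 1 = (r-1) * A" unfolding A_def by (rule power_diff_1_eq)
  have B: "r^m - 1 = (r-1) * B" unfolding B_def by (rule power_diff_1_eq)
  have C: "r^J - 1 = (r-1) * C" unfolding C_def by (rule power_diff_1_eq)
  have r0: "0 < r - 1" using r by simp
  have Bpos: "m \<le> B"
  proof -
    have "(\<Sum>i<m. (1::real)) \<le> B" unfolding B_def using r by (intro sum_mono) auto
    then show ?thesis by simp
  qed
  have Bp: "0 < B" using Bpos m2 by simp
  have Cle: "C \<le> J * r^(J-1)"
  proof -
    have "C \<le> (\<Sum>i<J. r^(J-1))" unfolding C_def using r by (intro sum_mono power_increasing) auto
    then show ?thesis by simp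
  qed
  have Cp: "0 \<le> C" unfolding C_def using r by (intro sum_nonneg) auto
  have rk: "r^k = r^(J-1) * r^m" by (metis km(2) power_add)
  have Age: "r^(J-1) * B \<le> A"
  proof -
    have "(r-1) * (r^(J-1) * B) = r^(J-1) * ((r-1) * B)" by (simp add: algebra_simps)
    also have "\<dots> = r^(J-1) * (r^m - 1)" using B by simp
    also have "\<dots> = r^k - r^(J-1)" using rk by (simp add: algebra_simps)
    also have "\<dots> \<le> r^k - 1" using r by simp
    finally have "(r-1) * (r^(J-1) * B) \<le> (r-1) * A" using A by simp
    then show ?thesis using r0 by simp
  qed
  have rJ1: "0 < r^(J-1)" using r by simp
  have Ap: "0 < A" using Age rJ1 Bp by (smt (verit) mult_pos_pos)
  have e1: "r^(k+1) - r^k = r^(J-1) * r^m * (r-1)"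
  proof -
    have "r^(k+1) - r^k = r^k * (r - 1)" by (simp add: algebra_simps)
    then show ?thesis using rk by simp
  qed
  have e2: "r^(k+1) - r^J = r^(J-1) * r * ((r-1) * B)"
  proof -
    have rJ: "r^J = r^(J-1) * r" using J by (simp add: power_Suc2[symmetric])
    have "r^(k+1) - r^J = r^(J-1) * r * (r^m - 1)" using rk rJ by (simp add: algebra_simps)
    then show ?thesis using B by simp
  qed
  have rm: "r^m = r * r^(m-1)" using m2 by (simp add: power_Suc[symmetric])
  have "(r^(k+1) - r^k)/(r^(k+1) - r^J) * ((r^J - 1)/(r^k - 1))
      = (r^(J-1) * r^m * (r-1)) / (r^(J-1) * r * ((r-1) * B)) * (((r-1) * C)/((r-1) * A))"
    using e1 e2 A C by simp
  also have "\<dots> = r^(m-1) * C / (A * B)"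
  proof -
    have f1: "((r-1)*C)/((r-1)*A) = C/A" using r0 by simp
    have nz: "r^(J-1) \<noteq> 0" "r \<noteq> 0" "r - 1 \<noteq> 0" "B \<noteq> 0" using rJ1 r r0 Bp by auto
    have f2: "(r^(J-1) * r^m * (r-1)) / (r^(J-1) * r * ((r-1) * B)) = r^(m-1) / B"
      unfolding rm using nz by (simp add: field_simps)
    show ?thesis unfolding f1 f2 by simp
  qed
  also have "\<dots> \<le> r^(m-1) * (J * r^(J-1)) / (r^(J-1) * B * B)"
  proof (rule frac_le)
    show "0 \<le> r ^ (m - 1) * (real J * r ^ (J - 1))" using r by simp
    show "r ^ (m - 1) * C \<le> r ^ (m - 1) * (real J * r ^ (J - 1))" using Cle r by simp
    show "0 < r ^ (J - 1) * B * B" using rJ1 Bp by simp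
    show "r ^ (J - 1) * B * B \<le> A * B" using Age Bp by (intro mult_right_mono) auto
  qed
  also have "\<dots> = J * r^(m-1) / B^2"
  proof -
    have nz: "r^(J-1) \<noteq> 0" "B \<noteq> 0" "r \<noteq> 0" using rJ1 Bp r by auto
    show ?thesis using nz by (simp add: field_simps power2_eq_square)
  qed
  also have "\<dots> \<le> J * r^(m-1) / (real m ^ 2 * r^(m-1))"
    using amgm_geom[of r m] r m2 Bp by (intro divide_left_mono mult_pos_pos) (auto simp: B_def)
  also have "\<dots> = J / (real m)^2" using r m2 by simp
  finally show ?thesis by (simp add: m_def)
qed

definition Dgood :: "int \<Rightarrow> (nat \<Rightarrow> int) set" where
  "Dgood k = {v. v 1 = k \<and> shft 1 v \<in> HIT {0<..<k+1} 0}"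
definition Ys :: "int \<Rightarrow> (nat \<Rightarrow> int) set" where
  "Ys k = {w. \<exists>t. w \<in> preh {0<..<k} k t \<and> shft t w \<in> HIT {0<..<k+1} 0}"
definition Xs :: "int \<Rightarrow> int \<Rightarrow> (nat \<Rightarrow> int) set" where
  "Xs J k = {w. \<exists>t. w \<in> preh {J<..<k+1} J t \<and> shft t w \<in> Ys k}"
definition Dbad :: "int \<Rightarrow> int \<Rightarrow> (nat \<Rightarrow> int) set" where
  "Dbad J k = {v. v 1 = k \<and> shft 1 v \<in> Xs J k}"

lemma Ys_meas[measurable]: "Ys k \<in> sets PS" unfolding Ys_def by (intro seq_meas HIT_meas)
lemma Xs_meas[measurable]: "Xs J k \<in> sets PS" unfolding Xs_def by (intro seq_meas Ys_meas)
lemma Dgood_meas[measurable]: "Dgood k \<in> sets PS" unfolding Dgood_def by (intro step_meas HIT_meas)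
lemma Dbad_meas[measurable]: "Dbad J k \<in> sets PS" unfolding Dbad_def by (intro step_meas Xs_meas)

lemma ratio:
  fixes J k :: int
  assumes p: "0 < p" "p < 1/2" and J: "1 \<le> J" "J < k"
  shows "measure (srw_law p (k+1)) (Dbad J k) \<le> real_of_int J / (real_of_int (k+1-J))^2 * measure (srw_law p (k+1)) (Dgood k)"
proof -
  define r where "r = (1-p)/p"
  have r1: "1 < r" using p by (simp add: r_def field_simps)
  have p1: "0 \<le> p" "p \<le> 1" using p by auto
  define H0 where "H0 = measure (srw_law p k) (HIT {0<..<k+1} 0)"
  define H1 where "H1 = measure (srw_law p k) (HIT {J<..<k+1} J)"
  define H2 where "H2 = measure (srw_law p J) (HIT {0<..<k} k)"
  have good: "measure (srw_law p (k+1)) (Dgood k) = (1-p) * H0"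
    unfolding Dgood_def H0_def by (rule step_measure[OF p1 HIT_meas])
  have "measure (srw_law p (k+1)) (Dbad J k) = (1-p) * measure (srw_law p k) (Xs J k)"
    unfolding Dbad_def by (rule step_measure[OF p1 Xs_meas])
  also have "measure (srw_law p k) (Xs J k) = H1 * measure (srw_law p J) (Ys k)"
    unfolding Xs_def H1_def by (rule strong_markov_hit[OF p1 Ys_meas]) simp
  also have "measure (srw_law p J) (Ys k) = H2 * H0"
    unfolding Ys_def H2_def H0_def by (rule strong_markov_hit[OF p1 HIT_meas]) simp
  finally have bad: "measure (srw_law p (k+1)) (Dbad J k) = (1-p) * H0 * (H1 * H2)" by simp
  have b1: "H1 \<le> (r^nat (k+1) - r^nat k)/(r^nat (k+1) - r^nat J)"
    unfolding H1_def r_def using hit_low[OF p, of J "k+1" k] J by simp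
  have b2: "H2 \<le> (r^nat J - r^nat 0)/(r^nat k - r^nat 0)"
    unfolding H2_def r_def using hit_high[OF p, of 0 k J] J by simp
  have nn: "0 \<le> H1" "0 \<le> H2" "0 \<le> H0" unfolding H0_def H1_def H2_def by auto
  have "H1 * H2 \<le> (r^nat (k+1) - r^nat k)/(r^nat (k+1) - r^nat J) * ((r^nat J - 1)/(r^nat k - 1))"
    using b1 b2 nn by (intro mult_mono) auto
  also have "\<dots> \<le> real (nat J) / (real (nat k + 1 - nat J))^2"
  proof -
    have "nat (k+1) = nat k + 1" using J by simp
    then show ?thesis using ck_bound[OF r1, of "nat J" "nat k"] J by simp
  qed
  also have "real (nat J) / (real (nat k + 1 - nat J))^2 = real_of_int J / (real_of_int (k+1-J))^2"
    using J by (simp add: of_nat_diff)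
  finally have "H1 * H2 \<le> real_of_int J / (real_of_int (k+1-J))^2" .
  then have "(1-p) * H0 * (H1 * H2) \<le> (1-p) * H0 * (real_of_int J / (real_of_int (k+1-J))^2)"
    using nn p by (intro mult_left_mono) auto
  then show ?thesis using good bad by (simp add: mult_ac)
qed

definition Pre :: "int \<Rightarrow> int \<Rightarrow> nat \<Rightarrow> (nat \<Rightarrow> int) set" where
  "Pre N k u = {w. w u = k+1 \<and> (\<forall>i\<le>u. 1 \<le> w i) \<and> (\<forall>i. 1 \<le> i \<and> i \<le> u \<longrightarrow> w i \<noteq> N)}"
definition Good :: "int \<Rightarrow> int \<Rightarrow> (nat \<Rightarrow> int) set" where
  "Good N k = (\<Union>u. Pre N k u \<inter> {w. shft u w \<in> Dgood k})"
definition Bad :: "int \<Rightarrow> int \<Rightarrow> int \<Rightarrow> (nat \<Rightarrow> int) set" where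
  "Bad N J k = (\<Union>u. Pre N k u \<inter> {w. shft u w \<in> Dbad J k})"

lemma Pre_meas[measurable]: "Pre N k u \<in> sets PS"
proof -
  have "{w \<in> space PS. w u = k+1 \<and> (\<forall>i\<le>u. 1 \<le> w i) \<and> (\<forall>i. 1 \<le> i \<and> i \<le> u \<longrightarrow> w i \<noteq> N)} \<in> sets PS"
    by measurable
  then show ?thesis unfolding Pre_def by simp
qed

lemma Pre_dep: "dep u (Pre N k u)" unfolding dep_def Pre_def by auto

lemma Dbad_sub: "0 \<le> J \<Longrightarrow> Dbad J k \<subseteq> Dgood k"
proof
  fix v assume J: "0 \<le> J" and "v \<in> Dbad J k"
  then have v1: "v 1 = k" and X: "shft 1 v \<in> Xs J k" by (auto simp: Dbad_def)
  define w where "w = shft 1 v"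
  from X obtain t1 where t1: "w t1 = J" "\<forall>i<t1. w i \<in> {J<..<k+1}" "shft t1 w \<in> Ys k"
    by (auto simp: Xs_def preh_def w_def)
  from t1(3) obtain t2 where t2: "w (t1+t2) = k" "\<forall>i<t2. w (t1+i) \<in> {0<..<k}"
      "shft t2 (shft t1 w) \<in> HIT {0<..<k+1} 0"
    by (auto simp: Ys_def preh_def shft_def)
  from t2(3) obtain t3 where t3: "w (t1+t2+t3) = 0" "\<forall>i<t3. w (t1+t2+i) \<in> {0<..<k+1}"
    by (auto simp: HIT_def preh_def shft_def add.assoc)
  have "\<forall>i<t1+t2+t3. w i \<in> {0<..<k+1}"
  proof (intro allI impI)
    fix i assume i: "i < t1+t2+t3"
    show "w i \<in> {0<..<k+1}"
    proof (cases "i < t1")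
      case True then show ?thesis using t1(2) J by force
    next
      case False
      show ?thesis
      proof (cases "i < t1 + t2")
        case True
        then obtain d where "i = t1 + d" "d < t2" using False by (metis add_diff_inverse_nat add_less_cancel_left)
        then show ?thesis using t2(2) by force
      next
        case False
        then obtain d where "i = t1 + t2 + d" "d < t3" using i by (metis add_diff_inverse_nat add_less_cancel_left)
        then show ?thesis using t3(2) by force
      qed
    qed
  qed
  then have "w \<in> HIT {0<..<k+1} 0" using t3(1) unfolding HIT_def preh_def by blast
  then show "v \<in> Dgood k" using v1 by (simp add: Dgood_def w_def)
qed

lemma Good_disj: "disjoint_family (\<lambda>u. Pre N k u \<inter> {w. shft u w \<in> Dgood k})"
proof -
  have *: False if u: "u < u'" and w1: "w \<in> Pre N k u \<inter> {w. shft u w \<in> Dgood k}"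
      and w2: "w \<in> Pre N k u' \<inter> {w. shft u' w \<in> Dgood k}" for u u' w
  proof -
    from w1 obtain t where t: "w (u+1+t) = 0" "\<forall>i<t. w (u+1+i) \<in> {0<..<k+1}"
      by (auto simp: Dgood_def HIT_def preh_def shft_def add.assoc)
    from w2 have u': "w u' = k+1" "\<forall>i\<le>u'. 1 \<le> w i" by (auto simp: Pre_def)
    show False
    proof (cases "u' < u+1+t")
      case True
      have "u' = u+1+(u' - (u+1))" "u' - (u+1) < t" using u True by auto
      then show False using t(2) u'(1) by (metis greaterThanLessThan_iff less_irrefl)
    next
      case False
      then have "1 \<le> w (u+1+t)" using u'(2) by simp
      then show False using t(1) by simp
    qed
  qed
  show ?thesis unfolding disjoint_family_on_def
  proof (intro ballI impI)
    fix u u' :: nat assume "u \<in> UNIV" "u' \<in> UNIV" "u \<noteq> u'"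
    then show "(Pre N k u \<inter> {w. shft u w \<in> Dgood k}) \<inter> (Pre N k u' \<inter> {w. shft u' w \<in> Dgood k}) = {}"
      using * by (metis disjoint_iff linorder_neqE_nat)
  qed
qed

lemma Bad_le:
  fixes J k N :: int
  assumes p: "0 < p" "p < 1/2" and J: "1 \<le> J" "J < k"
  shows "measure (srw_law p N) (Bad N J k) \<le> real_of_int J / (real_of_int (k+1-J))^2 * measure (srw_law p N) (Good N k)"
proof -
  have p1: "0 \<le> p" "p \<le> 1" using p by auto
  define c where "c = real_of_int J / (real_of_int (k+1-J))^2"
  have c0: "0 \<le> c" using J by (simp add: c_def)
  have cnd: "\<And>t w. w \<in> Pre N k t \<Longrightarrow> w t = k+1" by (simp add: Pre_def)
  have sg: "(\<lambda>t. measure (srw_law p N) (Pre N k t) * measure (srw_law p (k+1)) (Dgood k)) sums measure (srw_law p N) (Good N k)"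
    unfolding Good_def
    apply (rule markov_sums[where p=p and F="Dgood k" and \<Phi>="Pre N k" and c="k+1" and x=N])
    using p1 apply simp
    using p1 apply simp
    apply (rule Dgood_meas)
    apply (rule Pre_meas)
    apply (rule Pre_dep)
    apply (erule cnd)
    apply (rule Good_disj)
    done
  have disjb: "disjoint_family (\<lambda>u. Pre N k u \<inter> {w. shft u w \<in> Dbad J k})"
    unfolding disjoint_family_on_def
  proof (intro ballI impI)
    fix u u' :: nat assume uu: "u \<noteq> u'"
    have sub: "\<And>u. Pre N k u \<inter> {w. shft u w \<in> Dbad J k} \<subseteq> Pre N k u \<inter> {w. shft u w \<in> Dgood k}"
      using Dbad_sub[of J k] J by auto
    have "(Pre N k u \<inter> {w. shft u w \<in> Dgood k}) \<inter> (Pre N k u' \<inter> {w. shft u' w \<in> Dgood k}) = {}"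
      using Good_disj[of N k] uu unfolding disjoint_family_on_def by simp
    then show "(Pre N k u \<inter> {w. shft u w \<in> Dbad J k}) \<inter> (Pre N k u' \<inter> {w. shft u' w \<in> Dbad J k}) = {}"
      using sub[of u] sub[of u'] by blast
  qed
  have sb: "(\<lambda>t. measure (srw_law p N) (Pre N k t) * measure (srw_law p (k+1)) (Dbad J k)) sums measure (srw_law p N) (Bad N J k)"
    unfolding Bad_def
    apply (rule markov_sums[where p=p and F="Dbad J k" and \<Phi>="Pre N k" and c="k+1" and x=N])
    using p1 apply simp
    using p1 apply simp
    apply (rule Dbad_meas)
    apply (rule Pre_meas)
    apply (rule Pre_dep)
    apply (erule cnd)
    apply (rule disjb)
    done
  have sg': "(\<lambda>t. c * (measure (srw_law p N) (Pre N k t) * measure (srw_law p (k+1)) (Dgood k))) sums (c * measure (srw_law p N) (Good N k))"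
    by (rule sums_mult[OF sg])
  have "measure (srw_law p N) (Pre N k t) * measure (srw_law p (k+1)) (Dbad J k)
        \<le> c * (measure (srw_law p N) (Pre N k t) * measure (srw_law p (k+1)) (Dgood k))" for t
  proof -
    have "measure (srw_law p N) (Pre N k t) * measure (srw_law p (k+1)) (Dbad J k)
        \<le> measure (srw_law p N) (Pre N k t) * (c * measure (srw_law p (k+1)) (Dgood k))"
      using ratio[OF p J] by (intro mult_left_mono) (auto simp: c_def)
    then show ?thesis by (simp add: mult_ac)
  qed
  then have "measure (srw_law p N) (Bad N J k) \<le> c * measure (srw_law p N) (Good N k)"
    by (rule sums_le[OF _ sb sg'])
  then show ?thesis by (simp add: c_def)
qed

lemma Good_sub:
  fixes N k :: int
  assumes "k < N"
  shows "Good N k \<subseteq> {w. hit_time 0 w < hit_time_pos N w}"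
proof
  fix w assume "w \<in> Good N k"
  then obtain u where u: "w u = k+1" "\<forall>i\<le>u. 1 \<le> w i" "\<forall>i. 1 \<le> i \<and> i \<le> u \<longrightarrow> w i \<noteq> N"
    and g: "shft u w \<in> Dgood k" by (auto simp: Good_def Pre_def)
  from g obtain t where t: "w (u+1+t) = 0" "\<forall>i<t. w (u+1+i) \<in> {0<..<k+1}"
    by (auto simp: Dgood_def HIT_def preh_def shft_def add.assoc)
  define T where "T = u+1+t"
  have pos: "1 \<le> w i" if "i < T" for i
  proof (cases "i \<le> u")
    case True then show ?thesis using u(2) by auto
  next
    case False
    have "i = u+1+(i - (u+1))" "i - (u+1) < t" using that False unfolding T_def by auto
    then show ?thesis using t(2) by (metis greaterThanLessThan_iff int_one_le_iff_zero_less)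
  qed
  have notN: "w i \<noteq> N" if "1 \<le> i" "i \<le> T" for i
  proof (cases "i \<le> u")
    case True then show ?thesis using u(3) that by auto
  next
    case False
    show ?thesis
    proof (cases "i = T")
      case True then show ?thesis using t(1) assms u(1) u(2) unfolding T_def
        by (smt (verit, best) le_refl)
    next
      case False
      have "i = u+1+(i - (u+1))" "i - (u+1) < t" using that False \<open>\<not> i \<le> u\<close> unfolding T_def by auto
      then have "w i \<in> {0<..<k+1}" using t(2) by metis
      then show ?thesis using assms by auto
    qed
  qed
  have h0: "hit_time 0 w = enat T"
  proof -
    have ex: "\<exists>n. w n = 0" using t(1) by blast
    have "(LEAST n. w n = 0) = T"
    proof (rule Least_equality)
      show "w T = 0" using t(1) by (simp add: T_def)
      fix y assume y: "w y = 0" show "T \<le> y"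
      proof (rule ccontr)
        assume "\<not> T \<le> y" then have "1 \<le> w y" using pos by simp
        then show False using y by simp
      qed
    qed
    then show ?thesis using ex by (simp add: hit_time_def)
  qed
  show "w \<in> {w. hit_time 0 w < hit_time_pos N w}"
  proof (cases "\<exists>n\<ge>1. w n = N")
    case True
    have "T < (LEAST n. 1 \<le> n \<and> w n = N)"
    proof (rule ccontr)
      assume "\<not> T < (LEAST n. 1 \<le> n \<and> w n = N)"
      moreover have "1 \<le> (LEAST n. 1 \<le> n \<and> w n = N) \<and> w (LEAST n. 1 \<le> n \<and> w n = N) = N"
        using True by (metis (mono_tags, lifting) LeastI)
      ultimately show False using notN[of "LEAST n. 1 \<le> n \<and> w n = N"] by simp
    qed
    then show ?thesis using True h0 by (simp add: hit_time_pos_def)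
  next
    case False
    then have "hit_time_pos N w = \<infinity>" by (simp add: hit_time_pos_def)
    then show ?thesis using h0 by simp
  qed
qed

definition validp :: "(nat \<Rightarrow> int) \<Rightarrow> bool" where
  "validp w \<longleftrightarrow> (\<forall>i. \<bar>w (Suc i) - w i\<bar> = 1)"

lemma ivt:
  assumes v: "validp w" and ab: "a \<le> b"
  shows "(w a \<le> y \<and> y \<le> w b) \<or> (w b \<le> y \<and> y \<le> w a) \<Longrightarrow> \<exists>t. a \<le> t \<and> t \<le> b \<and> w t = y"
  using ab
proof (induction b)
  case 0 then show ?case by auto
next
  case (Suc b)
  show ?case
  proof (cases "a = Suc b")
    case True then show ?thesis using Suc.prems by auto
  next
    case False
    then have ab': "a \<le> b" using Suc.prems by simp
    show ?thesis
    proof (cases "(w a \<le> y \<and> y \<le> w b) \<or> (w b \<le> y \<and> y \<le> w a)")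
      case True
      then obtain t where "a \<le> t \<and> t \<le> b \<and> w t = y" using Suc.IH ab' by blast
      then show ?thesis by (intro exI[of _ t]) auto
    next
      case False
      have "\<bar>w (Suc b) - w b\<bar> = 1" using v by (simp add: validp_def)
      then have "w (Suc b) = y" using False Suc.prems(1) by auto
      then show ?thesis using ab' by (intro exI[of _ "Suc b"]) auto
    qed
  qed
qed

lemma ivt_down: "validp w \<Longrightarrow> a \<le> b \<Longrightarrow> w b \<le> y \<Longrightarrow> y \<le> w a \<Longrightarrow> \<exists>t. a \<le> t \<and> t \<le> b \<and> w t = y"
  using ivt by blast
lemma ivt_up: "validp w \<Longrightarrow> a \<le> b \<Longrightarrow> w a \<le> y \<Longrightarrow> y \<le> w b \<Longrightarrow> \<exists>t. a \<le> t \<and> t \<le> b \<and> w t = y"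
  using ivt by blast

locale goodpath =
  fixes N :: nat and w :: "nat \<Rightarrow> int"
  assumes v: "validp w" and w0: "w 0 = int N" and N1: "1 \<le> N"
    and A: "hit_time 0 w < hit_time_pos (int N) w"
begin

definition tau where "tau = (LEAST n. w n = 0)"

lemma ex0: "\<exists>n. w n = 0"
proof (rule ccontr)
  assume "\<not> (\<exists>n. w n = 0)"
  then have "hit_time 0 w = \<infinity>" by (simp add: hit_time_def)
  then show False using A by simp
qed

lemma tau0: "w tau = 0" unfolding tau_def using ex0 by (rule LeastI_ex)

lemma tau_pos: "i < tau \<Longrightarrow> 1 \<le> w i"
proof (rule ccontr)
  assume i: "i < tau" "\<not> 1 \<le> w i"
  then have "w i \<le> 0" by simp
  then obtain t where t: "0 \<le> t" "t \<le> i" "w t = 0" using ivt_down[OF v, of 0 i 0] w0 by auto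
  then have "tau \<le> t" unfolding tau_def by (intro Least_le) (use t in simp)
  then show False using t i by simp
qed

lemma hit0: "hit_time 0 w = enat tau"
  using ex0 by (simp add: hit_time_def tau_def)

lemma tau_notN: "1 \<le> i \<Longrightarrow> i \<le> tau \<Longrightarrow> w i \<noteq> int N"
proof
  assume i: "1 \<le> i" "i \<le> tau" "w i = int N"
  then have ex: "\<exists>n\<ge>1. w n = int N" by blast
  then have "hit_time_pos (int N) w = enat (LEAST n. 1 \<le> n \<and> w n = int N)" by (simp add: hit_time_pos_def)
  moreover have "(LEAST n. 1 \<le> n \<and> w n = int N) \<le> i" using i by (intro Least_le) simp
  ultimately have "hit_time_pos (int N) w \<le> enat tau" using i by simp
  then show False using A hit0 by simp
qed

lemma lv:
  fixes L :: int assumes L: "1 \<le> L" "L \<le> int N"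
  shows "w (last_visit L w) = L" "last_visit L w < tau" "\<forall>j<last_visit L w. 1 \<le> w j"
    "\<And>n. last_visit L w < n \<Longrightarrow> n < tau \<Longrightarrow> w n \<noteq> L"
proof -
  define V where "V = {n. w n = L \<and> (\<forall>j<n. w j \<ge> 1)}"
  have Vsub: "V \<subseteq> {..<tau}"
  proof
    fix n assume n: "n \<in> V"
    show "n \<in> {..<tau}"
    proof (rule ccontr)
      assume "n \<notin> {..<tau}"
      then have "tau \<le> n" by simp
      then show False
      proof (cases "tau = n")
        case True then show False using n tau0 L by (simp add: V_def)
      next
        case False then have "tau < n" using \<open>tau \<le> n\<close> by simp
        then show False using n tau0 by (auto simp: V_def)
      qed
    qed
  qed
  have fin: "finite V" using Vsub finite_subset by blast
  obtain t where t: "t \<le> tau" "w t = L" using ivt_down[OF v, of 0 tau L] tau0 w0 L by auto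
  have "t \<noteq> tau" using t tau0 L by auto
  then have "t \<in> V" using t tau_pos by (auto simp: V_def)
  then have ne: "V \<noteq> {}" by auto
  have lvV: "last_visit L w = Max V" unfolding last_visit_def V_def ..
  have inV: "last_visit L w \<in> V" unfolding lvV using fin ne by (rule Max_in)
  show "w (last_visit L w) = L" "\<forall>j<last_visit L w. 1 \<le> w j" using inV by (auto simp: V_def)
  show "last_visit L w < tau" using inV Vsub by auto
  fix n assume n: "last_visit L w < n" "n < tau"
  show "w n \<noteq> L"
  proof
    assume "w n = L"
    then have "n \<in> V" using n tau_pos by (auto simp: V_def)
    then have "n \<le> last_visit L w" unfolding lvV using fin by simp
    then show False using n by simp
  qed
qed

lemma below:
  fixes k :: nat assumes k: "k < N" and i: "last_visit (int k + 1) w < i" "i \<le> tau"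
  shows "w i \<le> int k"
proof (rule ccontr)
  assume "\<not> w i \<le> int k"
  then have "int k + 1 \<le> w i" by simp
  then obtain t where t: "i \<le> t" "t \<le> tau" "w t = int k + 1" using ivt_down[OF v i(2), of "int k + 1"] tau0 by auto
  have "t \<noteq> tau" using t tau0 by auto
  then have "t < tau" using t by simp
  then show False using lv(4)[of "int k + 1" t] k t i by simp
qed

lemma step_after:
  fixes k :: nat assumes k: "k < N"
  shows "w (Suc (last_visit (int k + 1) w)) = int k" "Suc (last_visit (int k + 1) w) \<le> tau"
proof -
  let ?u = "last_visit (int k + 1) w"
  have u: "w ?u = int k + 1" "?u < tau" using lv[of "int k + 1"] k by auto
  show "Suc ?u \<le> tau" using u by simp
  then have "w (Suc ?u) \<le> int k" using below[OF k, of "Suc ?u"] by simp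
  moreover have "\<bar>w (Suc ?u) - w ?u\<bar> = 1" using v by (simp add: validp_def)
  ultimately show "w (Suc (last_visit (int k + 1) w)) = int k" using u by auto
qed

end

context goodpath
begin

lemma in_Bad:
  fixes k :: nat and J :: int and n :: nat
  assumes k: "1 \<le> k" "k < N" and J: "1 \<le> J" "J < int k"
    and n: "last_visit (int k + 1) w < n" "n \<le> last_visit (int k) w" "w n \<le> J"
  shows "w \<in> Bad (int N) J (int k)"
proof -
  define u where "u = last_visit (int k + 1) w"
  have u: "w u = int k + 1" "u < tau" "\<forall>j<u. 1 \<le> w j" using lv[of "int k + 1"] k by (auto simp: u_def)
  have u1: "w (Suc u) = int k" "Suc u \<le> tau" using step_after[OF k(2)] by (auto simp: u_def)
  have sk: "w (last_visit (int k) w) = int k" "last_visit (int k) w < tau" "\<forall>j<last_visit (int k) w. 1 \<le> w j"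
    using lv[of "int k"] k by auto
  have bel: "\<And>i. u < i \<Longrightarrow> i \<le> tau \<Longrightarrow> w i \<le> int k" using below[OF k(2)] by (simp add: u_def)
  have pre_ok: "w \<in> Pre (int N) (int k) u"
    unfolding Pre_def using u tau_notN
    by (auto simp: le_less)
  have nu: "Suc u \<le> n" using n(1) by (simp add: u_def)
  have exJ: "\<exists>s. Suc u \<le> s \<and> w s = J"
    using ivt_down[OF v nu, of J] n(3) u1(1) J by auto
  define s where "s = (LEAST s. Suc u \<le> s \<and> w s = J)"
  have s: "Suc u \<le> s" "w s = J" unfolding s_def using LeastI_ex[OF exJ] by auto
  have s_le: "s \<le> n"
  proof -
    obtain t where "Suc u \<le> t" "t \<le> n" "w t = J" using ivt_down[OF v nu, of J] n(3) u1(1) J by auto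
    then have "s \<le> t" unfolding s_def by (intro Least_le) simp
    then show ?thesis using \<open>t \<le> n\<close> by simp
  qed
  have s_tau: "s < tau" using s_le n(2) sk(2) by simp
  have seg1: "\<forall>i<s - Suc u. w (Suc u + i) \<in> {J<..<int k + 1}"
  proof (intro allI impI)
    fix i assume i: "i < s - Suc u"
    have le: "w (Suc u + i) \<le> int k" using bel[of "Suc u + i"] i s_tau by simp
    have gt: "J < w (Suc u + i)"
    proof (rule ccontr)
      assume "\<not> J < w (Suc u + i)"
      then obtain t where t: "Suc u \<le> t" "t \<le> Suc u + i" "w t = J"
        using ivt_down[OF v, of "Suc u" "Suc u + i" J] u1(1) J by auto
      then have "s \<le> t" unfolding s_def by (intro Least_le) simp
      then show False using t i by simp
    qed
    show "w (Suc u + i) \<in> {J<..<int k + 1}" using le gt by simp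
  qed
  have exk: "\<exists>s2. s \<le> s2 \<and> w s2 = int k" using s_le n(2) sk(1) by (intro exI[of _ "last_visit (int k) w"]) simp
  define s2 where "s2 = (LEAST s2. s \<le> s2 \<and> w s2 = int k)"
  have s2: "s \<le> s2" "w s2 = int k" unfolding s2_def using LeastI_ex[OF exk] by auto
  have s2_le: "s2 \<le> last_visit (int k) w" unfolding s2_def using s_le n(2) sk(1) by (intro Least_le) simp
  have s2_tau: "s2 < tau" using s2_le sk(2) by simp
  have seg2: "\<forall>i<s2 - s. w (s + i) \<in> {0<..<int k}"
  proof (intro allI impI)
    fix i assume i: "i < s2 - s"
    have pos: "1 \<le> w (s + i)" using tau_pos[of "s+i"] i s2_tau by simp
    have lt: "w (s + i) < int k"
    proof (rule ccontr)
      assume "\<not> w (s + i) < int k"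
      then obtain t where t: "s \<le> t" "t \<le> s + i" "w t = int k"
        using ivt_up[OF v, of s "s + i" "int k"] s(2) J by auto
      then have "s2 \<le> t" unfolding s2_def by (intro Least_le) simp
      then show False using t i by simp
    qed
    show "w (s + i) \<in> {0<..<int k}" using pos lt by simp
  qed
  have seg3: "\<forall>i<tau - s2. w (s2 + i) \<in> {0<..<int k + 1}"
  proof (intro allI impI)
    fix i assume i: "i < tau - s2"
    have pos: "1 \<le> w (s2 + i)" using tau_pos[of "s2+i"] i by simp
    have le: "w (s2 + i) \<le> int k" using bel[of "s2 + i"] i s2 s by simp
    show "w (s2 + i) \<in> {0<..<int k + 1}" using pos le by simp
  qed
  have h3: "shft s2 w \<in> HIT {0<..<int k + 1} 0"
    unfolding HIT_def preh_def shft_def using seg3 tau0 s2_tau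
    by (intro UN_I[of "tau - s2"]) auto
  have h2: "shft s w \<in> Ys (int k)"
  proof -
    have "shft s w \<in> preh {0<..<int k} (int k) (s2 - s)"
      unfolding preh_def shft_def using seg2 s2 by auto
    moreover have "shft (s2 - s) (shft s w) = shft s2 w" using s2 by (simp add: shft_def)
    ultimately show ?thesis unfolding Ys_def using h3 by auto
  qed
  have h1: "shft (Suc u) w \<in> Xs J (int k)"
  proof -
    have "shft (Suc u) w \<in> preh {J<..<int k + 1} J (s - Suc u)"
      unfolding preh_def shft_def using seg1 s by auto
    moreover have "shft (s - Suc u) (shft (Suc u) w) = shft s w" using s by (simp add: shft_def)
    ultimately show ?thesis unfolding Xs_def using h2 by auto
  qed
  have "shft u w \<in> Dbad J (int k)"
  proof -
    have "shft 1 (shft u w) = shft (Suc u) w" by (simp add: shft_def)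
    then show ?thesis unfolding Dbad_def using h1 u1(1) by (simp add: shft_def)
  qed
  then show ?thesis unfolding Bad_def using pre_ok by auto
qed

end

context goodpath
begin

lemma bad_exists:
  assumes N3: "3 \<le> N" and eps: "\<epsilon> < \<bar>max_dev N w\<bar>"
  shows "\<exists>k n. 2 \<le> k \<and> k < N \<and> last_visit (int k + 1) w < n \<and> n \<le> last_visit (int k) w \<and>
           \<epsilon> < log (real N) (real k) - log (real N) (real_of_int (w n))"
proof -
  define f where "f = (\<lambda>k n. log (real N) (real k) - log (real N) (real_of_int (w n)))"
  define S where "S = {f k n | k n. 2 \<le> k \<and> k < N \<and> last_visit (int k + 1) w < n \<and> n \<le> last_visit (int k) w}"
  have md: "max_dev N w = Max S" unfolding max_dev_def S_def f_def ..
  have "S \<subseteq> (\<lambda>(k,n). f k n) ` ({..<N} \<times> {..tau})"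
  proof
    fix x assume "x \<in> S"
    then obtain k n where kn: "x = f k n" "2 \<le> k" "k < N" "n \<le> last_visit (int k) w" unfolding S_def by blast
    have "last_visit (int k) w < tau" using lv(2)[of "int k"] kn by simp
    then show "x \<in> (\<lambda>(k,n). f k n) ` ({..<N} \<times> {..tau})" using kn by force
  qed
  then have fin: "finite S" by (rule finite_subset) auto
  let ?u = "last_visit (int 2 + 1) w"
  have st: "w (Suc ?u) = int 2" "Suc ?u \<le> tau" using step_after[of 2] N3 by auto
  have "Suc ?u \<noteq> tau" using st tau0 by auto
  then have "Suc ?u < tau" using st by simp
  then have le2: "Suc ?u \<le> last_visit (int 2) w"
    using lv(4)[of 2 "Suc ?u"] st(1) N3 by (cases "last_visit (int 2) w < Suc ?u") auto
  have w2: "w (last_visit (int 2) w) = 2" using lv(1)[of 2] N3 by simp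
  have el: "f 2 (last_visit (int 2) w) \<in> S"
    unfolding S_def using le2 N3 by (intro CollectI exI[of _ 2] exI[of _ "last_visit (int 2) w"]) auto
  have f0: "f 2 (last_visit (int 2) w) = 0" unfolding f_def using w2 by simp
  have ne: "S \<noteq> {}" using el by auto
  have "0 \<le> Max S" using Max_ge[OF fin el] f0 by simp
  then have "\<epsilon> < Max S" using eps md by simp
  moreover have "Max S \<in> S" using fin ne by (rule Max_in)
  ultimately obtain k n where "\<epsilon> < f k n" "2 \<le> k" "k < N" "last_visit (int k + 1) w < n" "n \<le> last_visit (int k) w"
    unfolding S_def by auto
  then show ?thesis unfolding f_def by blast
qed

end

lemma log_to_bound:
  fixes N k :: nat and x :: int
  assumes N: "2 \<le> N" and x: "1 \<le> x" and k: "1 \<le> k"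
    and l: "\<epsilon> < log (real N) (real k) - log (real N) (real_of_int x)"
  shows "x \<le> \<lceil>real k * real N powr (-\<epsilon>)\<rceil> - 1"
proof -
  have lnN: "0 < ln (real N)" using N by simp
  have "\<epsilon> < (ln (real k) - ln (real_of_int x)) / ln (real N)"
    using l by (simp add: log_def diff_divide_distrib)
  then have "\<epsilon> * ln (real N) < ln (real k) - ln (real_of_int x)"
    using lnN by (simp add: pos_less_divide_eq)
  then have "ln (real_of_int x) < ln (real k) + (-\<epsilon>) * ln (real N)" by simp
  also have "\<dots> = ln (real k * real N powr (-\<epsilon>))"
    using k N by (simp add: ln_mult ln_powr)
  finally have "real_of_int x < real k * real N powr (-\<epsilon>)"
    using x k N by (subst (asm) ln_less_cancel_iff) auto
  also have "\<dots> \<le> real_of_int \<lceil>real k * real N powr (-\<epsilon>)\<rceil>" by (rule le_of_int_ceiling)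
  finally show ?thesis by simp
qed

lemma harm_ln: "(\<Sum>k\<in>{2..N}. 1 / real k) \<le> ln (real N)" if "1 \<le> N" for N :: nat
  using that
proof (induction N rule: dec_induct)
  case base then show ?case by simp
next
  case (step n)
  have "(\<Sum>k\<in>{2..Suc n}. 1 / real k) = (\<Sum>k\<in>{2..n}. 1 / real k) + 1 / real (Suc n)"
    using step by (simp add: sum.atLeast_Suc_atMost_Suc_shift atLeastAtMostSuc_conv)
  also have "\<dots> \<le> ln (real n) + 1 / real (Suc n)" using step by simp
  also have "\<dots> \<le> ln (real (Suc n))"
  proof -
    have pos: "0 < real n / real (Suc n)" using step by simp
    have "ln (real n / real (Suc n)) \<le> real n / real (Suc n) - 1" by (rule ln_le_minus_one[OF pos])
    also have "\<dots> = - (1 / real (Suc n))" by (simp add: field_simps)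
    finally have "ln (real n) - ln (real (Suc n)) \<le> - (1 / real (Suc n))"
      using step by (simp add: ln_div)
    then show ?thesis by simp
  qed
  finally show ?case .
qed

lemma valid_meas: "{w. \<not> validp w \<or> w 0 \<noteq> c} \<in> sets PS"
proof -
  have "{w \<in> space PS. \<not> (\<forall>i. \<bar>w (Suc i) - w i\<bar> = 1) \<or> w 0 \<noteq> c} \<in> sets PS" by measurable
  then show ?thesis by (simp add: validp_def)
qed

lemma valid_null: "measure (srw_law p c) {w. \<not> validp w \<or> w 0 \<noteq> c} = 0"
proof -
  have "walk c -` {w. \<not> validp w \<or> w 0 \<noteq> c} = {}"
    by (auto simp: walk_def validp_def)
  then show ?thesis using emeasure_srw[OF valid_meas] by (simp add: measure_def)
qed

lemma Bad_meas: "Bad N J k \<in> sets PS"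
  unfolding Bad_def
  by (intro sets.countable_UN sets.Int Pre_meas)
     (use measurable_sets[OF shift_meas Dbad_meas] in \<open>auto simp: vimage_def\<close>)

lemma ck_le:
  fixes J :: int and k :: nat and \<theta> :: real
  assumes J: "1 \<le> J" "real_of_int J < real k * \<theta>" and th: "\<theta> \<le> 1/2" and k: "1 \<le> k"
  shows "real_of_int J / (real_of_int (int k + 1 - J))^2 \<le> 4 * \<theta> / real k"
proof -
  have "0 < real k * \<theta>" using J by linarith
  then have th0: "0 < \<theta>" by (simp add: zero_less_mult_iff)
  have "real k * \<theta> \<le> real k * (1/2)" using th by (intro mult_left_mono) auto
  then have m: "real k / 2 \<le> real_of_int (int k + 1 - J)" using J by simp
  have kp: "0 < real k" using k by simp
  have "(real k / 2)^2 \<le> (real_of_int (int k + 1 - J))^2"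
    using m kp by (intro power_mono) auto
  then have "real_of_int J / (real_of_int (int k + 1 - J))^2 \<le> real_of_int J / (real k / 2)^2"
    using J kp by (intro divide_left_mono mult_pos_pos) auto
  also have "\<dots> = 4 * real_of_int J / (real k)^2" by (simp add: power2_eq_square field_simps)
  also have "\<dots> \<le> 4 * (real k * \<theta>) / (real k)^2" using J kp by (intro divide_right_mono) auto
  also have "\<dots> = 4 * \<theta> / real k" using kp by (simp add: power2_eq_square field_simps)
  finally show ?thesis .
qed

lemma main_bound:
  fixes N :: nat and p \<epsilon> :: real
  assumes p: "0 < p" "p < 1/2" and eps: "0 < \<epsilon>" and N3: "3 \<le> N" and th: "real N powr (-\<epsilon>) \<le> 1/2"
  shows "cond_prob (srw_law p (int N)) (\<lambda>w. \<epsilon> < \<bar>max_dev N w\<bar>) (\<lambda>w. hit_time 0 w < hit_time_pos (int N) w)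
         \<le> 4 * real N powr (-\<epsilon>) * ln (real N)"
proof -
  define M where "M = srw_law p (int N)"
  define \<theta> where "\<theta> = real N powr (-\<epsilon>)"
  define Jf where "Jf = (\<lambda>k::nat. \<lceil>real k * \<theta>\<rceil> - 1)"
  define K where "K = {k \<in> {2..<N}. 1 \<le> Jf k}"
  define Aset where "Aset = {w. hit_time 0 w < hit_time_pos (int N) w}"
  define BA where "BA = {w. \<epsilon> < \<bar>max_dev N w\<bar> \<and> hit_time 0 w < hit_time_pos (int N) w}"
  define Inv where "Inv = {w::nat\<Rightarrow>int. \<not> validp w \<or> w 0 \<noteq> int N}"
  interpret prob_space M unfolding M_def by (rule prob_space_srw)
  have th0: "0 < \<theta>" unfolding \<theta>_def using N3 by simp
  have cp: "cond_prob M (\<lambda>w. \<epsilon> < \<bar>max_dev N w\<bar>) (\<lambda>w. hit_time 0 w < hit_time_pos (int N) w) = measure M BA / measure M Aset"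
    unfolding cond_prob_def BA_def Aset_def M_def by simp
  have Jlt: "real_of_int (Jf k) < real k * \<theta>" for k
    unfolding Jf_def using ceiling_correct[of "real k * \<theta>"] by simp
  have incl: "BA \<subseteq> Inv \<union> (\<Union>k\<in>K. Bad (int N) (Jf k) (int k))"
  proof
    fix w assume w: "w \<in> BA"
    show "w \<in> Inv \<union> (\<Union>k\<in>K. Bad (int N) (Jf k) (int k))"
    proof (cases "w \<in> Inv")
      case True then show ?thesis by simp
    next
      case False
      then have gp: "goodpath N w" using w N3 unfolding goodpath_def Inv_def BA_def by auto
      from w have "\<epsilon> < \<bar>max_dev N w\<bar>" by (simp add: BA_def)
      from goodpath.bad_exists[OF gp N3 this] obtain k n where kn: "2 \<le> k" "k < N"
        "last_visit (int k + 1) w < n" "n \<le> last_visit (int k) w"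
        "\<epsilon> < log (real N) (real k) - log (real N) (real_of_int (w n))" by blast
      have "last_visit (int k) w < goodpath.tau w" using goodpath.lv(2)[OF gp, of "int k"] kn by simp
      then have wn1: "1 \<le> w n" using goodpath.tau_pos[OF gp, of n] kn by simp
      have wnJ: "w n \<le> Jf k" unfolding Jf_def \<theta>_def
        using log_to_bound[of N "w n" k \<epsilon>] N3 wn1 kn by simp
      have J1: "1 \<le> Jf k" using wn1 wnJ by simp
      have "real k * \<theta> \<le> real k * (1/2)" using th by (intro mult_left_mono) (auto simp: \<theta>_def)
      moreover have "(2::real) \<le> real k" using kn by simp
      ultimately have "real_of_int (Jf k) < real k" using Jlt[of k] by linarith
      then have Jk: "Jf k < int k" by simp
      have "w \<in> Bad (int N) (Jf k) (int k)"
        using goodpath.in_Bad[OF gp, of k "Jf k" n] kn J1 Jk wnJ by simp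
      moreover have "k \<in> K" using kn J1 by (simp add: K_def)
      ultimately show ?thesis by blast
    qed
  qed
  have finK: "finite K" by (simp add: K_def)
  have Badm: "\<And>k. Bad (int N) (Jf k) (int k) \<in> sets M"
    unfolding M_def by (simp add: Bad_meas)
  have Invm: "Inv \<in> sets M" unfolding Inv_def M_def using valid_meas by simp
  have Inv0: "measure M Inv = 0" unfolding Inv_def M_def by (rule valid_null)
  have mBA: "measure M BA \<le> (\<Sum>k\<in>K. measure M (Bad (int N) (Jf k) (int k)))"
  proof -
    have UK: "(\<Union>k\<in>K. Bad (int N) (Jf k) (int k)) \<in> sets M" using finK Badm by auto
    have "measure M BA \<le> measure M (Inv \<union> (\<Union>k\<in>K. Bad (int N) (Jf k) (int k)))"
    proof (cases "BA \<in> sets M")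
      case True then show ?thesis using incl UK Invm by (intro finite_measure_mono) auto
    next
      case False then show ?thesis by (simp add: measure_notin_sets)
    qed
    also have "\<dots> \<le> measure M Inv + measure M (\<Union>k\<in>K. Bad (int N) (Jf k) (int k))"
      by (rule measure_Un_le[OF Invm UK])
    also have "\<dots> \<le> (\<Sum>k\<in>K. measure M (Bad (int N) (Jf k) (int k)))"
      using Inv0 measure_UNION_le[OF finK, of "\<lambda>k. Bad (int N) (Jf k) (int k)" M] Badm by simp
    finally show ?thesis .
  qed
  have harm: "(\<Sum>k\<in>K. 4 * \<theta> / real k) \<le> 4 * \<theta> * ln (real N)"
  proof -
    have "(\<Sum>k\<in>K. 4 * \<theta> / real k) \<le> (\<Sum>k\<in>{2..N}. 4 * \<theta> / real k)"
      using th0 by (intro sum_mono2) (auto simp: K_def)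
    also have "\<dots> = 4 * \<theta> * (\<Sum>k\<in>{2..N}. 1 / real k)" by (simp add: sum_distrib_left)
    also have "\<dots> \<le> 4 * \<theta> * ln (real N)" using harm_ln[of N] N3 th0 by (intro mult_left_mono) auto
    finally show ?thesis .
  qed
  show ?thesis
  proof (cases "Aset \<in> sets M")
    case False
    then have "measure M Aset = 0" by (simp add: measure_notin_sets)
    then show ?thesis using cp N3 th0 unfolding M_def \<theta>_def by simp
  next
    case True
    have "measure M BA \<le> (\<Sum>k\<in>K. 4 * \<theta> / real k * measure M Aset)"
    proof -
      have "measure M (Bad (int N) (Jf k) (int k)) \<le> 4 * \<theta> / real k * measure M Aset" if k: "k \<in> K" for k
      proof -
        have kk: "2 \<le> k" "k < N" "1 \<le> Jf k" using k by (auto simp: K_def)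
        have Jk: "Jf k < int k"
        proof -
          have "real k * \<theta> \<le> real k * (1/2)" using th by (intro mult_left_mono) (auto simp: \<theta>_def)
          moreover have "(2::real) \<le> real k" using kk by simp
          ultimately have "real_of_int (Jf k) < real k" using Jlt[of k] by linarith
          then show ?thesis by simp
        qed
        have "measure M (Bad (int N) (Jf k) (int k)) \<le> real_of_int (Jf k) / (real_of_int (int k + 1 - Jf k))^2 * measure M (Good (int N) (int k))"
          unfolding M_def using Bad_le[OF p kk(3) Jk] by simp
        also have "\<dots> \<le> real_of_int (Jf k) / (real_of_int (int k + 1 - Jf k))^2 * measure M Aset"
        proof (rule mult_left_mono)
          show "measure M (Good (int N) (int k)) \<le> measure M Aset"
            using Good_sub[of "int k" "int N"] kk True unfolding Aset_def by (intro finite_measure_mono) auto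
          show "0 \<le> real_of_int (Jf k) / (real_of_int (int k + 1 - Jf k))^2" using kk by simp
        qed
        also have "\<dots> \<le> 4 * \<theta> / real k * measure M Aset"
          using ck_le[of "Jf k" k \<theta>] kk Jlt[of k] th unfolding \<theta>_def by (intro mult_right_mono) auto
        finally show ?thesis .
      qed
      then show ?thesis using mBA by (meson order_trans sum_mono)
    qed
    also have "\<dots> = (\<Sum>k\<in>K. 4 * \<theta> / real k) * measure M Aset" by (simp add: sum_distrib_right)
    also have "\<dots> \<le> 4 * \<theta> * ln (real N) * measure M Aset" using harm by (intro mult_right_mono) auto
    finally have num: "measure M BA \<le> 4 * \<theta> * ln (real N) * measure M Aset" .
    show ?thesis
    proof (cases "measure M Aset = 0")
      case True then show ?thesis using cp N3 th0 unfolding M_def \<theta>_def by simp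
    next
      case False
      then have "0 < measure M Aset" using measure_nonneg[of M Aset] by linarith
      then have "measure M BA / measure M Aset \<le> 4 * \<theta> * ln (real N)"
        using num by (simp add: divide_le_eq)
      then show ?thesis using cp unfolding M_def \<theta>_def by simp
    qed
  qed
qed

theorem corollaryA9:
  fixes p :: "nat \<Rightarrow> real"
  assumes "\<And>N. 0 < p N \<and> p N < 1/2"
  shows "\<forall>\<epsilon>>0. (\<lambda>N. cond_prob (srw_law (p N) (int N))
                      (\<lambda>w. \<bar>max_dev N w\<bar> > \<epsilon>)
                      (\<lambda>w. hit_time 0 w < hit_time_pos (int N) w)) \<longlonglongrightarrow> 0"
proof (intro allI impI)
  fix \<epsilon> :: real assume eps: "\<epsilon> > 0"
  have lim: "(\<lambda>N. 4 * real N powr (-\<epsilon>) * ln (real N)) \<longlonglongrightarrow> 0"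
    using eps by real_asymp
  have lim2: "(\<lambda>N. real N powr (-\<epsilon>)) \<longlonglongrightarrow> 0"
    using eps by real_asymp
  have ev1: "eventually (\<lambda>N. real N powr (-\<epsilon>) \<le> 1/2) sequentially"
    using order_tendstoD(2)[OF lim2, of "1/2"] by (auto elim: eventually_mono)
  have ev: "eventually (\<lambda>N. cond_prob (srw_law (p N) (int N)) (\<lambda>w. \<bar>max_dev N w\<bar> > \<epsilon>)
                      (\<lambda>w. hit_time 0 w < hit_time_pos (int N) w) \<le> 4 * real N powr (-\<epsilon>) * ln (real N)) sequentially"
    using ev1 eventually_ge_at_top[of 3]
  proof eventually_elim
    case (elim N)
    then show ?case using main_bound[of "p N" \<epsilon> N] assms[of N] eps by simp
  qed
  have ev0: "eventually (\<lambda>N. 0 \<le> cond_prob (srw_law (p N) (int N)) (\<lambda>w. \<bar>max_dev N w\<bar> > \<epsilon>)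
                      (\<lambda>w. hit_time 0 w < hit_time_pos (int N) w)) sequentially"
    by (simp add: cond_prob_def)
  show "(\<lambda>N. cond_prob (srw_law (p N) (int N)) (\<lambda>w. \<bar>max_dev N w\<bar> > \<epsilon>)
                      (\<lambda>w. hit_time 0 w < hit_time_pos (int N) w)) \<longlonglongrightarrow> 0"
    by (rule tendsto_sandwich[OF ev0 ev tendsto_const lim])
qed

end
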